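(* Let $\mathbf{R}\in SO(3)$, $\theta\in(\theta^-,\theta^+)$ and $\mathbf{A}\in\mathbb{R}^{3\times2}$. Define $\mathbf{L}_1:=\mathbf{R}[\mathbf{v}(\theta)\otimes\tilde{\mathbf{e}}_1+\mathbf{u}(\theta)\otimes\tilde{\mathbf{e}}_2]$ and $\mathbf{L}_2:=\mathbf{R}[(\mathbf{v}(\theta)\cdot\mathbf{v}'(\theta))\mathbf{u}(\theta)\otimes\tilde{\mathbf{e}}_1-(\mathbf{u}(\theta)\cdot\mathbf{u}'(\theta))\mathbf{v}(\theta)\otimes\tilde{\mathbf{e}}_2]$. Then $\mathbf{L}_1:\mathbf{A}=0$ and $\mathbf{L}_2:\mathbf{A}=0$ if and only if there exist $\boldsymbol{\omega}\in\mathbb{R}^3$ and $\xi\in\mathbb{R}$ with $\mathbf{A}\tilde{\mathbf{e}}_1=\mathbf{R}[\boldsymbol{\omega}\times\mathbf{u}(\theta)+\xi\mathbf{u}'(\theta)]$ and $\mathbf{A}\tilde{\mathbf{e}}_2=\mathbf{R}[\boldsymbol{\omega}\times\mathbf{v}(\theta)+\xi\mathbf{v}'(\theta)]$. (Applied pointwise, this holds for fields $\mathbf{A}(\mathbf{x})$ with $\mathbf{R}=\mathbf{R}_{\mathrm{eff}}(\mathbf{x})$, $\theta=\theta(\mathbf{x})$.)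
   Context: $\mathbf{u},\mathbf{v}:(\theta^-,\theta^+)\to\mathbb{R}^3$ are the deformed lattice vectors $\mathbf{u}(\theta)=\mathbf{t}_1(\theta)-\mathbf{t}_3(\theta)$, $\mathbf{v}(\theta)=\mathbf{t}_2(\theta)-\mathbf{t}_4(\theta)$ of the analytic mechanism parameterization of a parallelogram origami cell (rigid folding preserving crease lengths, adjacent-crease angles and mountain-valley assignment); they are orthogonal to $\mathbf{e}_3$ with $\mathbf{e}_3\cdot(\mathbf{u}\times\mathbf{v})>0$, and $\mathbf{u}'(\theta)\cdot\mathbf{u}(\theta)\neq0$, $\mathbf{v}'(\theta)\cdot\mathbf{v}(\theta)\neq0$ on $(\theta^-,\theta^+)$; primes are $d/d\theta$. $\{\tilde{\mathbf{e}}_1,\tilde{\mathbf{e}}_2\}$ is the standard basis of $\mathbb{R}^2$; $\mathbf{A}:\mathbf{B}:=\mathrm{Tr}(\mathbf{A}^T\mathbf{B})$. *)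

theory Defs
  imports "HOL-Analysis.Analysis" "HOL-Analysis.Cross3"
begin

definition outer :: "real^'m \<Rightarrow> real^'n \<Rightarrow> real^'n^'m" where
  "outer a b = (\<chi> i j. a $ i * b $ j)"

definition frob :: "real^'n^'m \<Rightarrow> real^'n^'m \<Rightarrow> real" where
  "frob A B = trace (transpose A ** B)"

definition crease_angle :: "real^3 \<Rightarrow> real^3 \<Rightarrow> real" where
  "crease_angle a b = arccos ((a \<bullet> b) / (norm a * norm b))"

text \<open>Rigid folding mechanism of the four crease vectors t1..t4 of a parallelogram
  origami cell on the open interval (theta_m, theta_p): each crease is a differentiable,
  nonzero vector function, crease lengths are constant, and the angles between
  adjacent creases (t1,t2),(t2,t3),(t3,t4),(t4,t1) are constant.\<close>
definition rigid_crease_mechanism ::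
  "real \<Rightarrow> real \<Rightarrow> (real \<Rightarrow> real^3) \<Rightarrow> (real \<Rightarrow> real^3) \<Rightarrow> (real \<Rightarrow> real^3) \<Rightarrow> (real \<Rightarrow> real^3) \<Rightarrow> bool"
where
  "rigid_crease_mechanism theta_m theta_p t1 t2 t3 t4 \<longleftrightarrow>
     theta_m < theta_p \<and>
     (\<forall>th\<in>{theta_m<..<theta_p}. \<forall>t\<in>{t1,t2,t3,t4}. t differentiable (at th) \<and> t th \<noteq> 0) \<and>
     (\<forall>a\<in>{theta_m<..<theta_p}. \<forall>b\<in>{theta_m<..<theta_p}.
        (\<forall>t\<in>{t1,t2,t3,t4}. norm (t a) = norm (t b)) \<and>
        (\<forall>(s,t)\<in>{(t1,t2),(t2,t3),(t3,t4),(t4,t1)}.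
            crease_angle (s a) (t a) = crease_angle (s b) (t b)))"

end

theory Submission
  imports Defs
begin

lemma frob_sum: "frob M B = (\<Sum>i\<in>UNIV. \<Sum>k\<in>UNIV. M$k$i * B$k$i)"
  by (simp add: frob_def trace_def matrix_matrix_mult_def transpose_def)

lemma frob_outer: "frob (outer a (axis j 1)) B = a \<bullet> (B *v axis j 1)"
proof -
  have "frob (outer a (axis j 1)) B = (\<Sum>i\<in>UNIV. \<Sum>k\<in>UNIV. (if i = j then a$k * B$k$i else 0))"
    by (auto simp: frob_sum outer_def axis_def intro!: sum.cong)
  also have "\<dots> = (\<Sum>k\<in>UNIV. \<Sum>i\<in>UNIV. (if i = j then a$k * B$k$i else 0))"
    by (rule sum.swap)
  also have "\<dots> = (\<Sum>k\<in>UNIV. a$k * B$k$j)"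
    by simp
  also have "\<dots> = a \<bullet> (B *v axis j 1)"
    by (simp add: inner_vec_def matrix_vector_mult_def axis_def if_distrib cong: if_cong)
  finally show ?thesis .
qed

lemma frob_add: "frob (M + N) B = frob M B + frob N B"
  by (simp add: frob_sum algebra_simps sum.distrib)
lemma frob_diff: "frob (M - N) B = frob M B - frob N B"
  by (simp add: frob_sum algebra_simps sum_subtractf)
lemma frob_scale: "frob (c *\<^sub>R M) B = c * frob M B"
  by (simp add: frob_sum algebra_simps sum_distrib_left)
lemma frob_mult: "frob (R ** M) A = frob M (transpose R ** A)"
  by (simp add: frob_def matrix_transpose_mul matrix_mul_assoc)

lemma angle_inner:
  fixes x y x' y' :: "real^3"
  assumes "x \<noteq> 0" "y \<noteq> 0" "norm x = norm x'" "norm y = norm y'"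
    "crease_angle x y = crease_angle x' y'"
  shows "x \<bullet> y = x' \<bullet> y'"
proof -
  have bnd: "\<bar>(a \<bullet> b) / (norm a * norm b)\<bar> \<le> 1" for a b :: "real^3"
  proof (cases "norm a * norm b = 0")
    case True then show ?thesis by (simp only: division_ring_divide_zero abs_zero)
  next
    case False
    then have p: "0 < norm a * norm b" by (simp add: less_le)
    have "\<bar>(a \<bullet> b) / (norm a * norm b)\<bar> = \<bar>a \<bullet> b\<bar> / (norm a * norm b)"
      using p by (simp only: abs_divide abs_of_pos)
    also have "\<dots> \<le> 1" using p Cauchy_Schwarz_ineq2[of a b]
      by (simp only: divide_le_eq_1_pos)
    finally show ?thesis .
  qed
  have r: "(x \<bullet> y) / (norm x * norm y) = (x' \<bullet> y') / (norm x' * norm y')"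
    using assms(5) arccos_eq_iff[OF conjI[OF bnd bnd]] unfolding crease_angle_def by blast
  have n: "norm x * norm y \<noteq> 0" using assms(1,2) by simp
  have "x \<bullet> y = (x \<bullet> y) / (norm x * norm y) * (norm x * norm y)" using n by simp
  also have "\<dots> = (x' \<bullet> y') / (norm x' * norm y') * (norm x' * norm y')" by (subst r) (simp only: assms(3,4))
  also have "\<dots> = x' \<bullet> y'" using n assms(3,4) by simp
  finally show ?thesis .
qed
lemma cross_solve:
  fixes u v b1 b2 :: "real^3"
  assumes u3: "u$3=0" and v3: "v$3=0" and D: "u$1 * v$2 - u$2 * v$1 \<noteq> 0"
    and h1: "b1\<bullet>u=0" and h2: "b2\<bullet>v=0" and h3: "v\<bullet>b1 + u\<bullet>b2 = 0"
  shows "\<exists>w. cross3 w u = b1 \<and> cross3 w v = b2"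
proof -
  obtain u1 u2 y1 y2 p1 p2 p3 q1 q2 q3 where
    n: "u1 = u$1" "u2 = u$2" "y1 = v$1" "y2 = v$2" "p1 = b1$1" "p2 = b1$2" "p3 = b1$3"
       "q1 = b2$1" "q2 = b2$2" "q3 = b2$3" by blast
  define D where "D = u1 * y2 - u2 * y1"
  have Dn: "D \<noteq> 0" using D by (simp add: D_def n)
  have e1: "p1*u1 + p2*u2 = 0" using h1 u3 by (simp add: inner_vec_def sum_3 n)
  have e2: "q1*y1 + q2*y2 = 0" using h2 v3 by (simp add: inner_vec_def sum_3 n)
  have e3: "y1*p1 + y2*p2 + u1*q1 + u2*q2 = 0" using h3 u3 v3 by (simp add: inner_vec_def sum_3 n)
  define w1 where "w1 = (u1*q3 - y1*p3)/D"
  define w2 where "w2 = (u2*q3 - y2*p3)/D"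
  define w3 where "w3 = (p1*y1 + p2*y2)/D"
  have c1: "- w3 * u2 = p1"
  proof -
    have "p1 * D + (p1*y1 + p2*y2) * u2 = y2 * (p1*u1 + p2*u2)" by (simp add: D_def algebra_simps)
    then show ?thesis using e1 Dn unfolding w3_def by (simp add: field_simps)
  qed
  have c2: "w3 * u1 = p2"
  proof -
    have "p2 * D - (p1*y1 + p2*y2) * u1 = - y1 * (p1*u1 + p2*u2)" by (simp add: D_def algebra_simps)
    then show ?thesis using e1 Dn unfolding w3_def by (simp add: field_simps)
  qed
  have c3: "w1 * u2 - w2 * u1 = p3"
  proof -
    have "(u1*q3 - y1*p3) * u2 - (u2*q3 - y2*p3) * u1 = p3 * D" by (simp add: D_def algebra_simps)
    then show ?thesis using Dn unfolding w1_def w2_def by (simp add: field_simps)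
  qed
  have d1: "- w3 * y2 = q1"
  proof -
    have "q1 * D + (p1*y1 + p2*y2) * y2 = y2 * (y1*p1 + y2*p2 + u1*q1 + u2*q2) - u2 * (q1*y1 + q2*y2)"
      by (simp add: D_def algebra_simps)
    also have "\<dots> = 0" using e2 e3 by simp
    finally have z: "q1 * D + (p1*y1 + p2*y2) * y2 = 0" .
    have "q1 = - ((p1*y1 + p2*y2) * y2) / D" using z Dn by (simp add: field_simps)
    then show ?thesis unfolding w3_def by simp
  qed
  have d2: "w3 * y1 = q2"
  proof -
    have "q2 * D - (p1*y1 + p2*y2) * y1 = u1 * (q1*y1 + q2*y2) - y1 * (y1*p1 + y2*p2 + u1*q1 + u2*q2)"
      by (simp add: D_def algebra_simps)
    also have "\<dots> = 0" using e2 e3 by simp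
    finally have z: "q2 * D - (p1*y1 + p2*y2) * y1 = 0" .
    have "q2 = ((p1*y1 + p2*y2) * y1) / D" using z Dn by (simp add: field_simps)
    then show ?thesis unfolding w3_def by simp
  qed
  have d3: "w1 * y2 - w2 * y1 = q3"
  proof -
    have "(u1*q3 - y1*p3) * y2 - (u2*q3 - y2*p3) * y1 = q3 * D" by (simp add: D_def algebra_simps)
    then show ?thesis using Dn unfolding w1_def w2_def by (simp add: field_simps)
  qed
  define w :: "real^3" where "w = vector [w1, w2, w3]"
  have w: "w$1 = w1" "w$2 = w2" "w$3 = w3" by (simp_all add: w_def)
  show ?thesis
  proof (intro exI conjI)
    show "cross3 w u = b1"
      unfolding vec_eq_iff forall_3 cross3_def using c1 c2 c3
      by (simp add: w u3 n[symmetric])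
    show "cross3 w v = b2"
      unfolding vec_eq_iff forall_3 cross3_def using d1 d2 d3
      by (simp add: w v3 n[symmetric])
  qed
qed

lemma core:
  fixes u v u' v' a1 a2 :: "real^3"
  assumes u3: "u$3=0" and v3: "v$3=0" and D: "u$1 * v$2 - u$2 * v$1 \<noteq> 0"
    and uu: "u \<bullet> u' \<noteq> 0" and vv: "v \<bullet> v' \<noteq> 0" and c: "v \<bullet> u' + u \<bullet> v' = 0"
  shows "(v \<bullet> a1 + u \<bullet> a2 = 0 \<and> (v \<bullet> v') * (u \<bullet> a1) - (u \<bullet> u') * (v \<bullet> a2) = 0) \<longleftrightarrow>
    (\<exists>\<omega> \<xi>. a1 = cross3 \<omega> u + \<xi> *\<^sub>R u' \<and> a2 = cross3 \<omega> v + \<xi> *\<^sub>R v')"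
proof
  assume h: "v \<bullet> a1 + u \<bullet> a2 = 0 \<and> (v \<bullet> v') * (u \<bullet> a1) - (u \<bullet> u') * (v \<bullet> a2) = 0"
  define \<xi> where "\<xi> = (u \<bullet> a1) / (u \<bullet> u')"
  define b1 where "b1 = a1 - \<xi> *\<^sub>R u'"
  define b2 where "b2 = a2 - \<xi> *\<^sub>R v'"
  have x1: "u \<bullet> a1 = \<xi> * (u \<bullet> u')" using uu by (simp add: \<xi>_def)
  have x2: "v \<bullet> a2 = \<xi> * (v \<bullet> v')"
  proof -
    have e0: "(u \<bullet> u') * (v \<bullet> a2) = (v \<bullet> v') * (u \<bullet> a1)" using h by linarith
    have "(u \<bullet> u') * (v \<bullet> a2) = (u \<bullet> u') * (\<xi> * (v \<bullet> v'))" using e0 x1 by (simp add: mult_ac)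
    then show ?thesis using uu by (metis mult_left_cancel)
  qed
  have "b1 \<bullet> u = 0" using x1 by (simp add: b1_def inner_diff_left inner_diff_right inner_commute)
  moreover have "b2 \<bullet> v = 0" using x2 by (simp add: b2_def inner_diff_left inner_diff_right inner_commute)
  moreover have "v \<bullet> b1 + u \<bullet> b2 = 0"
  proof -
    have "v \<bullet> b1 + u \<bullet> b2 = (v \<bullet> a1 + u \<bullet> a2) - \<xi> * (v \<bullet> u' + u \<bullet> v')"
      by (simp add: b1_def b2_def inner_diff_right algebra_simps)
    then show ?thesis using h c by simp
  qed
  ultimately obtain w where w: "cross3 w u = b1" "cross3 w v = b2"
    using cross_solve[OF u3 v3 D] by blast
  show "\<exists>\<omega> \<xi>. a1 = cross3 \<omega> u + \<xi> *\<^sub>R u' \<and> a2 = cross3 \<omega> v + \<xi> *\<^sub>R v'"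
    by (rule exI[of _ w], rule exI[of _ \<xi>]) (simp add: w b1_def b2_def)
next
  assume "\<exists>\<omega> \<xi>. a1 = cross3 \<omega> u + \<xi> *\<^sub>R u' \<and> a2 = cross3 \<omega> v + \<xi> *\<^sub>R v'"
  then obtain w \<xi> where a: "a1 = cross3 w u + \<xi> *\<^sub>R u'" "a2 = cross3 w v + \<xi> *\<^sub>R v'" by blast
  have t: "v \<bullet> cross3 w u + u \<bullet> cross3 w v = 0"
    by (simp add: cross3_def inner_vec_def sum_3 vector_def algebra_simps)
  have "v \<bullet> a1 + u \<bullet> a2 = (v \<bullet> cross3 w u + u \<bullet> cross3 w v) + \<xi> * (v \<bullet> u' + u \<bullet> v')"
    by (simp add: a inner_add_right distrib_left)
  then have 1: "v \<bullet> a1 + u \<bullet> a2 = 0" using t c by simp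
  have "u \<bullet> a1 = \<xi> * (u \<bullet> u')" "v \<bullet> a2 = \<xi> * (v \<bullet> v')"
    by (simp_all add: a inner_add_right dot_cross_self)
  then have 2: "(v \<bullet> v') * (u \<bullet> a1) - (u \<bullet> u') * (v \<bullet> a2) = 0" by simp
  show "v \<bullet> a1 + u \<bullet> a2 = 0 \<and> (v \<bullet> v') * (u \<bullet> a1) - (u \<bullet> u') * (v \<bullet> a2) = 0"
    using 1 2 by blast
qed

lemma rot_eq:
  fixes R :: "real^3^3"
  assumes "orthogonal_matrix R"
  shows "(y = R *v z) \<longleftrightarrow> (transpose R *v y = z)"
proof -
  have a: "transpose R ** R = mat 1" "R ** transpose R = mat 1"
    using assms by (simp_all add: orthogonal_matrix_def)
  show ?thesis
  proof
    assume "y = R *v z"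
    then show "transpose R *v y = z" by (simp only: matrix_vector_mul_assoc a(1) matrix_vector_mul_lid)
  next
    assume h: "transpose R *v y = z"
    have "R *v z = R *v (transpose R *v y)" by (simp only: h)
    also have "\<dots> = y" by (simp only: matrix_vector_mul_assoc a(2) matrix_vector_mul_lid)
    finally show "y = R *v z" by simp
  qed
qed

theorem lemmaB2:
  fixes theta_m theta_p :: real
    and t1 t2 t3 t4 u v :: "real \<Rightarrow> real^3"
    and R :: "real^3^3" and th :: real and A :: "real^2^3"
  assumes mech: "rigid_crease_mechanism theta_m theta_p t1 t2 t3 t4"
    and u_def: "u = (\<lambda>s. t1 s - t3 s)"
    and v_def: "v = (\<lambda>s. t2 s - t4 s)"
    and orth: "\<forall>s\<in>{theta_m<..<theta_p}. u s \<bullet> axis 3 1 = 0 \<and> v s \<bullet> axis 3 1 = 0"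
    and orient: "\<forall>s\<in>{theta_m<..<theta_p}. axis 3 1 \<bullet> cross3 (u s) (v s) > 0"
    and nondeg_u: "\<forall>s\<in>{theta_m<..<theta_p}. vector_derivative u (at s) \<bullet> u s \<noteq> 0"
    and nondeg_v: "\<forall>s\<in>{theta_m<..<theta_p}. vector_derivative v (at s) \<bullet> v s \<noteq> 0"
    and R_SO3: "rotation_matrix R"
    and th_in: "th \<in> {theta_m<..<theta_p}"
  shows
    "(let u' = vector_derivative u (at th); v' = vector_derivative v (at th);
          L1 = R ** (outer (v th) (axis 1 1) + outer (u th) (axis 2 1));
          L2 = R ** ((v th \<bullet> v') *\<^sub>R outer (u th) (axis 1 1)
                     - (u th \<bullet> u') *\<^sub>R outer (v th) (axis 2 1))
      in (frob L1 A = 0 \<and> frob L2 A = 0 \<longleftrightarrow>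
          (\<exists>\<omega> :: real^3. \<exists>\<xi> :: real.
              A *v axis 1 1 = R *v (cross3 \<omega> (u th) + \<xi> *\<^sub>R u') \<and>
              A *v axis 2 1 = R *v (cross3 \<omega> (v th) + \<xi> *\<^sub>R v'))))"
proof -
  let ?I = "{theta_m<..<theta_p}"
  have m: "theta_m < theta_p \<and> (\<forall>s\<in>?I. \<forall>t\<in>{t1,t2,t3,t4}. t differentiable (at s) \<and> t s \<noteq> 0) \<and>
    (\<forall>a\<in>?I. \<forall>b\<in>?I. (\<forall>t\<in>{t1,t2,t3,t4}. norm (t a) = norm (t b)) \<and>
        (\<forall>(s,t)\<in>{(t1,t2),(t2,t3),(t3,t4),(t4,t1)}.
            crease_angle (s a) (t a) = crease_angle (s b) (t b)))"
    using mech unfolding rigid_crease_mechanism_def .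
  note dif = m[THEN conjunct2, THEN conjunct1]
  note cst = m[THEN conjunct2, THEN conjunct2]
  have adj: "t1 a \<bullet> t2 a = t1 b \<bullet> t2 b \<and> t2 a \<bullet> t3 a = t2 b \<bullet> t3 b \<and>
      t3 a \<bullet> t4 a = t3 b \<bullet> t4 b \<and> t4 a \<bullet> t1 a = t4 b \<bullet> t1 b"
    if ab: "a \<in> ?I" "b \<in> ?I" for a b
  proof -
    have c1: "\<forall>t\<in>{t1,t2,t3,t4}. norm (t a) = norm (t b)" using cst ab by blast
    have c2: "\<forall>(s,t)\<in>{(t1,t2),(t2,t3),(t3,t4),(t4,t1)}.
            crease_angle (s a) (t a) = crease_angle (s b) (t b)" using cst ab by blast
    have c3: "\<forall>t\<in>{t1,t2,t3,t4}. t a \<noteq> 0" using dif ab by blast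
    have N: "norm (t1 a) = norm (t1 b)" "norm (t2 a) = norm (t2 b)"
      "norm (t3 a) = norm (t3 b)" "norm (t4 a) = norm (t4 b)"
      using c1 by (simp_all only: ball_simps insert_iff simp_thms)
    have C: "crease_angle (t1 a) (t2 a) = crease_angle (t1 b) (t2 b)"
      "crease_angle (t2 a) (t3 a) = crease_angle (t2 b) (t3 b)"
      "crease_angle (t3 a) (t4 a) = crease_angle (t3 b) (t4 b)"
      "crease_angle (t4 a) (t1 a) = crease_angle (t4 b) (t1 b)"
      using c2 by (simp_all only: ball_simps prod.case simp_thms)
    have Z: "t1 a \<noteq> 0" "t2 a \<noteq> 0" "t3 a \<noteq> 0" "t4 a \<noteq> 0"
      using c3 by (simp_all only: ball_simps simp_thms)
    show ?thesis using angle_inner N C Z by blast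
  qed
  have uvc: "u a \<bullet> v a = u b \<bullet> v b" if ab: "a \<in> ?I" "b \<in> ?I" for a b
  proof -
    have e: "u s \<bullet> v s = t1 s \<bullet> t2 s - t4 s \<bullet> t1 s - t2 s \<bullet> t3 s + t3 s \<bullet> t4 s" for s
      by (simp add: u_def v_def inner_diff_left inner_diff_right inner_commute)
    show ?thesis using adj[OF ab] by (simp only: e)
  qed
  define u' where "u' = vector_derivative u (at th)"
  define v' where "v' = vector_derivative v (at th)"
  have ud: "u differentiable (at th)" using dif th_in unfolding u_def
    by (auto intro: differentiable_diff)
  have vd: "v differentiable (at th)" using dif th_in unfolding v_def
    by (auto intro: differentiable_diff)
  have du: "(u has_derivative (\<lambda>h. h *\<^sub>R u')) (at th)"
    using vector_derivative_works[THEN iffD1, OF ud] unfolding u'_def has_vector_derivative_def .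
  have dv: "(v has_derivative (\<lambda>h. h *\<^sub>R v')) (at th)"
    using vector_derivative_works[THEN iffD1, OF vd] unfolding v'_def has_vector_derivative_def .
  have fe: "(\<lambda>h. u th \<bullet> (h *\<^sub>R v') + (h *\<^sub>R u') \<bullet> v th) = (\<lambda>h. h *\<^sub>R (u th \<bullet> v' + u' \<bullet> v th))"
    by (simp add: fun_eq_iff algebra_simps)
  have "((\<lambda>s. u s \<bullet> v s) has_derivative (\<lambda>h. h *\<^sub>R (u th \<bullet> v' + u' \<bullet> v th))) (at th)"
    using has_derivative_inner[OF du dv] unfolding fe .
  then have dh: "((\<lambda>s. u s \<bullet> v s) has_real_derivative (u th \<bullet> v' + u' \<bullet> v th)) (at th)"
    unfolding has_real_derivative_iff_has_vector_derivative has_vector_derivative_def .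
  have c0: "u th \<bullet> v' + u' \<bullet> v th = 0"
  proof (rule DERIV_local_const[OF dh])
    show "0 < min (th - theta_m) (theta_p - th)" using th_in by simp
    show "\<forall>y. \<bar>th - y\<bar> < min (th - theta_m) (theta_p - th) \<longrightarrow> u th \<bullet> v th = u y \<bullet> v y"
    proof (intro allI impI)
      fix y assume "\<bar>th - y\<bar> < min (th - theta_m) (theta_p - th)"
      then have "y \<in> ?I" by auto
      then show "u th \<bullet> v th = u y \<bullet> v y" using uvc th_in by blast
    qed
  qed
  have u3: "u th $ 3 = 0" and v3: "v th $ 3 = 0" using orth th_in by (auto simp: inner_axis)
  have Dp: "axis 3 1 \<bullet> cross3 (u th) (v th) > 0" using orient th_in by blast
  have D: "u th $ 1 * v th $ 2 - u th $ 2 * v th $ 1 \<noteq> 0"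
    using Dp by (simp add: inner_axis' cross3_def vector_def)
  have uu: "u th \<bullet> u' \<noteq> 0" using nondeg_u th_in by (simp add: u'_def inner_commute)
  have vv: "v th \<bullet> v' \<noteq> 0" using nondeg_v th_in by (simp add: v'_def inner_commute)
  have c: "v th \<bullet> u' + u th \<bullet> v' = 0" using c0 by (simp add: inner_commute add.commute)
  have orthR: "orthogonal_matrix R" using R_SO3 by (simp add: rotation_matrix_def)
  define a1 where "a1 = transpose R *v (A *v axis 1 1)"
  define a2 where "a2 = transpose R *v (A *v axis 2 1)"
  have tra: "(transpose R ** A) *v axis j 1 = transpose R *v (A *v axis j 1)" for j
    by (simp add: matrix_vector_mul_assoc)
  have f1: "frob (R ** (outer (v th) (axis 1 1) + outer (u th) (axis 2 1))) A = v th \<bullet> a1 + u th \<bullet> a2"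
    by (simp add: frob_mult frob_add frob_outer tra a1_def a2_def)
  have f2: "frob (R ** ((v th \<bullet> v') *\<^sub>R outer (u th) (axis 1 1)
                     - (u th \<bullet> u') *\<^sub>R outer (v th) (axis 2 1))) A
      = (v th \<bullet> v') * (u th \<bullet> a1) - (u th \<bullet> u') * (v th \<bullet> a2)"
    by (simp add: frob_mult frob_diff frob_scale frob_outer tra a1_def a2_def)
  have ex: "(\<exists>\<omega> :: real^3. \<exists>\<xi> :: real.
              A *v axis 1 1 = R *v (cross3 \<omega> (u th) + \<xi> *\<^sub>R u') \<and>
              A *v axis 2 1 = R *v (cross3 \<omega> (v th) + \<xi> *\<^sub>R v')) \<longleftrightarrow>
         (\<exists>\<omega> \<xi>. a1 = cross3 \<omega> (u th) + \<xi> *\<^sub>R u' \<and> a2 = cross3 \<omega> (v th) + \<xi> *\<^sub>R v')"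
    by (simp only: rot_eq[OF orthR] a1_def a2_def)
  show ?thesis
    unfolding Let_def u'_def[symmetric] v'_def[symmetric] f1 f2 ex
    using core[OF u3 v3 D uu vv c] .
qed

end
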